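(* Let $P,Q$ be probability mass functions supported on $\{1,\dots,n\}$ (all masses positive) with $P\prec Q$. Let $f:(0,\infty)\to\mathbb R$ be convex and twice differentiable with $f(1)=0$, and let $q_{\max},q_{\min}$ be the maximal and minimal masses of $Q$. Then: (a) $$n\,e_f(nq_{\min},nq_{\max})(\|Q\|_2^2-\|P\|_2^2)\ge D_f(Q\|U_n)-D_f(P\|U_n)\ge n\,c_f(nq_{\min},nq_{\max})(\|Q\|_2^2-\|P\|_2^2)\ge0,$$ with equalities in the first two inequalities if $D_f=\chi^2$. (b) If moreover $q_{\max}/q_{\min}\le\rho$ for some $\rho\ge1$, then $0\le\|Q\|_2^2-\|P\|_2^2\le\frac{(\rho-1)^2}{4\rho n}$.
   Context: $U_n$ is the uniform distribution on $\{1,\dots,n\}$; $\|\cdot\|_2$ is the Euclidean norm of the probability vector. $P\prec Q$ ($P$ is majorized by $Q$) means that for each $k$, the sum of the $k$ largest masses of $P$ is at most that of $Q$. $D_f(P\|Q)=\sum_xQ(x)f(P(x)/Q(x))$; $\chi^2$ corresponds to $f(t)=(t-1)^2$. With $\mathcal I(\xi_1,\xi_2)=[\xi_1,\xi_2]\cap(0,\infty)$: $c_f(\xi_1,\xi_2)=\tfrac12\inf_{t\in\mathcal I}f''(t)$, $e_f(\xi_1,\xi_2)=\tfrac12\sup_{t\in\mathcal I}f''(t)$. *)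

theory Defs
  imports "HOL-Analysis.Analysis" "HOL-Library.Extended_Real"
begin

definition pmf_on :: "nat \<Rightarrow> (nat \<Rightarrow> real) \<Rightarrow> bool" where
  "pmf_on n P \<longleftrightarrow> (\<forall>i\<in>{1..n}. P i > 0) \<and> (\<Sum>i=1..n. P i) = 1"

definition top_sum :: "nat \<Rightarrow> (nat \<Rightarrow> real) \<Rightarrow> nat \<Rightarrow> real" where
  "top_sum n P k = Max {sum P S | S. S \<subseteq> {1..n} \<and> card S = k}"

definition majorized :: "nat \<Rightarrow> (nat \<Rightarrow> real) \<Rightarrow> (nat \<Rightarrow> real) \<Rightarrow> bool" where
  "majorized n P Q \<longleftrightarrow> (\<forall>k\<in>{1..n}. top_sum n P k \<le> top_sum n Q k)"

definition sqnorm :: "nat \<Rightarrow> (nat \<Rightarrow> real) \<Rightarrow> real" where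
  "sqnorm n P = (\<Sum>i=1..n. (P i)\<^sup>2)"

definition fdiv :: "(real \<Rightarrow> real) \<Rightarrow> nat \<Rightarrow> (nat \<Rightarrow> real) \<Rightarrow> (nat \<Rightarrow> real) \<Rightarrow> real" where
  "fdiv f n P Q = (\<Sum>i=1..n. Q i * f (P i / Q i))"

definition unif :: "nat \<Rightarrow> nat \<Rightarrow> real" where
  "unif n = (\<lambda>i. 1 / real n)"

definition Iset :: "real \<Rightarrow> real \<Rightarrow> real set" where
  "Iset \<xi>1 \<xi>2 = {\<xi>1..\<xi>2} \<inter> {0<..}"

text \<open>c_f and e_f, valued in the extended reals (the supremum of f'' may be infinite).\<close>
definition c_f :: "(real \<Rightarrow> real) \<Rightarrow> real \<Rightarrow> real \<Rightarrow> ereal" where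
  "c_f f \<xi>1 \<xi>2 = ereal (1/2) * (INF t\<in>Iset \<xi>1 \<xi>2. ereal (deriv (deriv f) t))"

definition e_f :: "(real \<Rightarrow> real) \<Rightarrow> real \<Rightarrow> real \<Rightarrow> ereal" where
  "e_f f \<xi>1 \<xi>2 = ereal (1/2) * (SUP t\<in>Iset \<xi>1 \<xi>2. ereal (deriv (deriv f) t))"

end

theory Submission imports Defs begin


lemma abel_nonneg:
  fixes w d :: "nat \<Rightarrow> real"
  assumes mono: "\<And>i. 1 \<le> i \<Longrightarrow> i < n \<Longrightarrow> w (Suc i) \<le> w i"
    and ps: "\<And>m. m \<le> n \<Longrightarrow> 0 \<le> (\<Sum>i=1..m. d i)" and tot: "(\<Sum>i=1..n. d i) = 0"
  shows "0 \<le> (\<Sum>i=1..n. w i * d i)"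
proof -
  have "m \<le> n \<Longrightarrow> w m * (\<Sum>i=1..m. d i) \<le> (\<Sum>i=1..m. w i * d i)" for m
  proof (induction m)
    case 0 then show ?case by simp
  next
    case (Suc m)
    show ?case
    proof (cases "m = 0")
      case True then show ?thesis by simp
    next
      case False
      have D: "0 \<le> (\<Sum>i=1..m. d i)" using ps Suc.prems by simp
      have W: "w (Suc m) \<le> w m" using mono False Suc.prems by simp
      have "w (Suc m) * (\<Sum>i=1..Suc m. d i) = w (Suc m) * (\<Sum>i=1..m. d i) + w (Suc m) * d (Suc m)"
        by (simp add: algebra_simps)
      also have "\<dots> \<le> w m * (\<Sum>i=1..m. d i) + w (Suc m) * d (Suc m)"
        using mult_right_mono[OF W D] by simp
      also have "\<dots> \<le> (\<Sum>i=1..m. w i * d i) + w (Suc m) * d (Suc m)"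
        using Suc by simp
      also have "\<dots> = (\<Sum>i=1..Suc m. w i * d i)" by simp
      finally show ?thesis .
    qed
  qed
  from this[of n] show ?thesis using tot by simp
qed

lemma conv_facts:
  fixes k k1 k2 :: "real \<Rightarrow> real"
  assumes a: "0 < a"
    and d1: "\<And>t. t > 0 \<Longrightarrow> (k has_real_derivative k1 t) (at t)"
    and d2: "\<And>t. t > 0 \<Longrightarrow> (k1 has_real_derivative k2 t) (at t)"
    and pos: "\<And>t. a \<le> t \<Longrightarrow> t \<le> b \<Longrightarrow> 0 \<le> k2 t"
  shows k1mono: "\<And>u v. a \<le> u \<Longrightarrow> u \<le> v \<Longrightarrow> v \<le> b \<Longrightarrow> k1 u \<le> k1 v"
    and tang: "\<And>x y. a \<le> x \<Longrightarrow> x \<le> b \<Longrightarrow> a \<le> y \<Longrightarrow> y \<le> b \<Longrightarrow> k1 y * (x - y) \<le> k x - k y"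
proof -
  show mono: "k1 u \<le> k1 v" if h: "a \<le> u" "u \<le> v" "v \<le> b" for u v
  proof (cases "u = v")
    case True then show ?thesis by simp
  next
    case False
    then have "u < v" using h by simp
    from MVT2[OF this, of k1 k2] obtain z where z: "u < z" "z < v" "k1 v - k1 u = (v - u) * k2 z"
      using d2 h a by force
    have "0 \<le> k2 z" using pos z h by simp
    then have "0 \<le> (v - u) * k2 z" using \<open>u < v\<close> by simp
    then show ?thesis using z by linarith
  qed
  show "k1 y * (x - y) \<le> k x - k y" if h: "a \<le> x" "x \<le> b" "a \<le> y" "y \<le> b" for x y
  proof (cases x y rule: linorder_cases)
    case less
    from MVT2[OF this, of k k1] obtain z where z: "x < z" "z < y" "k y - k x = (y - x) * k1 z"
      using d1 h a by force
    have "k1 z \<le> k1 y" using mono[of z y] z h by simp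
    then have "(y - x) * k1 z \<le> (y - x) * k1 y" using less by (simp add: mult_left_mono)
    then show ?thesis using z by (simp add: algebra_simps)
  next
    case greater
    from MVT2[OF this, of k k1] obtain z where z: "y < z" "z < x" "k x - k y = (x - y) * k1 z"
      using d1 h a by force
    have "k1 y \<le> k1 z" using mono[of y z] z h by simp
    then have "(x - y) * k1 y \<le> (x - y) * k1 z" using greater by (simp add: mult_left_mono)
    then show ?thesis using z by (simp add: algebra_simps)
  qed simp
qed

lemma karamata:
  fixes x y :: "nat \<Rightarrow> real" and k k1 k2 :: "real \<Rightarrow> real"
  assumes a: "0 < a"
    and d1: "\<And>t. t > 0 \<Longrightarrow> (k has_real_derivative k1 t) (at t)"
    and d2: "\<And>t. t > 0 \<Longrightarrow> (k1 has_real_derivative k2 t) (at t)"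
    and pos: "\<And>t. a \<le> t \<Longrightarrow> t \<le> b \<Longrightarrow> 0 \<le> k2 t"
    and xr: "\<And>i. 1 \<le> i \<Longrightarrow> i \<le> n \<Longrightarrow> a \<le> x i \<and> x i \<le> b"
    and yr: "\<And>i. 1 \<le> i \<Longrightarrow> i \<le> n \<Longrightarrow> a \<le> y i \<and> y i \<le> b"
    and yanti: "\<And>i. 1 \<le> i \<Longrightarrow> i < n \<Longrightarrow> y (Suc i) \<le> y i"
    and ps: "\<And>m. m \<le> n \<Longrightarrow> (\<Sum>i=1..m. y i) \<le> (\<Sum>i=1..m. x i)"
    and tot: "(\<Sum>i=1..n. y i) = (\<Sum>i=1..n. x i)"
  shows "(\<Sum>i=1..n. k1 (y i) * (x i - y i)) \<le> (\<Sum>i=1..n. k (x i) - k (y i))"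
    and "0 \<le> (\<Sum>i=1..n. k1 (y i) * (x i - y i))"
proof -
  note cf = conv_facts[OF a d1 d2 pos]
  show "(\<Sum>i=1..n. k1 (y i) * (x i - y i)) \<le> (\<Sum>i=1..n. k (x i) - k (y i))"
    by (rule sum_mono) (use cf(2) xr yr in auto)
  show "0 \<le> (\<Sum>i=1..n. k1 (y i) * (x i - y i))"
  proof (rule abel_nonneg)
    fix i assume i: "1 \<le> i" "i < n"
    have h: "a \<le> y (Suc i)" "y (Suc i) \<le> y i" "y i \<le> b"
      using yr[of i] yr[of "Suc i"] yanti[OF i] i by auto
    show "k1 (y (Suc i)) \<le> k1 (y i)" by (rule conv_facts(1)[of a k k1 k2 b, OF a d1 d2 pos h])
  next
    fix m assume "m \<le> n"
    then show "0 \<le> (\<Sum>i=1..m. x i - y i)" using ps[of m] by (simp add: sum_subtractf)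
  next
    show "(\<Sum>i=1..n. x i - y i) = 0" using tot by (simp add: sum_subtractf)
  qed
qed

lemma fpp_nonneg:
  fixes f :: "real \<Rightarrow> real"
  assumes conv: "convex_on {0<..} f" and d1: "\<forall>x>0. f differentiable (at x)"
    and d2: "\<forall>x>0. (deriv f) differentiable (at x)"
  shows "\<And>t. t > 0 \<Longrightarrow> 0 \<le> deriv (deriv f) t"
proof -
  have D1: "(f has_real_derivative deriv f x) (at x)" if "x > 0" for x
    using d1 that DERIV_deriv_iff_real_differentiable by blast
  have D2: "(deriv f has_real_derivative deriv (deriv f) x) (at x)" if "x > 0" for x
    using d2 that DERIV_deriv_iff_real_differentiable by blast
  have tan: "deriv f c * (x - c) \<le> f x - f c" if "c > 0" "x > 0" for c x
  proof (rule convex_on_imp_above_tangent[OF conv])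
    show "connected {0::real<..}" by (simp add: convex_connected)
    show "c \<in> interior {0<..}" using that by (simp add: interior_open)
    show "x \<in> {0<..}" using that by simp
    show "(f has_real_derivative deriv f c) (at c within {0<..})"
      using D1[OF that(1)] by (rule has_field_derivative_at_within)
  qed
  have mono: "deriv f u \<le> deriv f v" if "0 < u" "u < v" for u v
  proof -
    have "deriv f u * (v - u) \<le> f v - f u" using tan[of u v] that by simp
    moreover have "deriv f v * (u - v) \<le> f u - f v" using tan[of v u] that by simp
    ultimately have "0 \<le> (deriv f v - deriv f u) * (v - u)" by (simp add: algebra_simps)
    then show ?thesis using that by (simp add: zero_le_mult_iff)
  qed
  fix t :: real assume t: "t > 0"
  show "0 \<le> deriv (deriv f) t"
  proof (rule ccontr)
    assume "\<not> 0 \<le> deriv (deriv f) t"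
    then have "deriv (deriv f) t < 0" by simp
    from DERIV_neg_dec_right[OF D2[OF t] this] obtain d where d: "d > 0"
      "\<forall>h>0. h < d \<longrightarrow> deriv f t > deriv f (t + h)" by blast
    then have "deriv f t > deriv f (t + d/2)" by simp
    moreover have "deriv f t \<le> deriv f (t + d/2)" using mono[of t "t + d/2"] t d by simp
    ultimately show False by simp
  qed
qed



lemma sort_perm:
  fixes Q :: "nat \<Rightarrow> real"
  shows "\<exists>\<sigma>. bij_betw \<sigma> {1..n} {1..n} \<and> (\<forall>i j. 1 \<le> i \<longrightarrow> i \<le> j \<longrightarrow> j \<le> n \<longrightarrow> Q (\<sigma> j) \<le> Q (\<sigma> i))"
proof -
  define xs where "xs = sort_key (\<lambda>i. - Q i) [1..<Suc n]"
  define \<sigma> where "\<sigma> = (\<lambda>i. xs ! (i - 1))"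
  have len: "length xs = n" by (simp add: xs_def)
  have set: "set xs = {1..n}" by (auto simp: xs_def)
  have dist: "distinct xs" by (simp add: xs_def)
  have srt: "sorted (map (\<lambda>i. - Q i) xs)" unfolding xs_def by (rule sorted_sort_key)
  have inj: "inj_on \<sigma> {1..n}"
  proof (rule inj_onI)
    fix i j assume ij: "i \<in> {1..n}" "j \<in> {1..n}" "\<sigma> i = \<sigma> j"
    then have "i - 1 = j - 1" using nth_eq_iff_index_eq[OF dist, of "i - 1" "j - 1"] len
      by (auto simp: \<sigma>_def)
    then show "i = j" using ij by auto
  qed
  have img: "\<sigma> ` {1..n} = {1..n}"
  proof
    show "\<sigma> ` {1..n} \<subseteq> {1..n}"
    proof
      fix y assume "y \<in> \<sigma> ` {1..n}"
      then obtain i where "i \<in> {1..n}" "y = xs ! (i - 1)" by (auto simp: \<sigma>_def)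
      then have "y \<in> set xs" using len by (auto intro!: nth_mem)
      then show "y \<in> {1..n}" using set by simp
    qed
  next
    show "{1..n} \<subseteq> \<sigma> ` {1..n}"
    proof
      fix y assume "y \<in> {1..n}"
      then have "y \<in> set xs" using set by simp
      then obtain j where j: "j < n" "y = xs ! j" using len by (auto simp: in_set_conv_nth)
      then have "y = \<sigma> (Suc j)" by (simp add: \<sigma>_def)
      moreover have "Suc j \<in> {1..n}" using j by simp
      ultimately show "y \<in> \<sigma> ` {1..n}" by blast
    qed
  qed
  have anti: "\<forall>i j. 1 \<le> i \<longrightarrow> i \<le> j \<longrightarrow> j \<le> n \<longrightarrow> Q (\<sigma> j) \<le> Q (\<sigma> i)"
  proof (intro allI impI)
    fix i j :: nat assume h: "1 \<le> i" "i \<le> j" "j \<le> n"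
    have "(map (\<lambda>i. - Q i) xs) ! (i - 1) \<le> (map (\<lambda>i. - Q i) xs) ! (j - 1)"
      using sorted_nth_mono[OF srt, of "i - 1" "j - 1"] h len by simp
    then show "Q (\<sigma> j) \<le> Q (\<sigma> i)" using h len by (simp add: \<sigma>_def)
  qed
  show ?thesis using inj img anti unfolding bij_betw_def by blast
qed

lemma top_sum_sorted:
  fixes Q :: "nat \<Rightarrow> real"
  assumes bij: "bij_betw \<sigma> {1..n} {1..n}"
    and anti: "\<forall>i j. 1 \<le> i \<longrightarrow> i \<le> j \<longrightarrow> j \<le> n \<longrightarrow> Q (\<sigma> j) \<le> Q (\<sigma> i)"
    and kn: "k \<le> n"
  shows "top_sum n Q k = (\<Sum>i=1..k. Q (\<sigma> i))"
proof -
  define T where "T = \<sigma> ` {1..k}"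
  have injk: "inj_on \<sigma> {1..k}" using bij kn by (auto simp: bij_betw_def intro: inj_on_subset)
  have sT: "sum Q T = (\<Sum>i=1..k. Q (\<sigma> i))" unfolding T_def using sum.reindex[OF injk] by simp
  have cT: "card T = k" unfolding T_def using card_image[OF injk] by simp
  have Tsub: "T \<subseteq> {1..n}" using bij kn unfolding T_def bij_betw_def by auto
  have key: "Q a \<le> Q b" if a: "a \<in> {1..n}" "a \<notin> T" and b: "b \<in> T" for a b
  proof -
    have "a \<in> \<sigma> ` {1..n}" using a bij unfolding bij_betw_def by simp
    then obtain j where j: "j \<in> {1..n}" "a = \<sigma> j" by auto
    have "j \<notin> {1..k}" using a j unfolding T_def by auto
    then have jk: "k < j" using j by auto
    obtain i where i: "i \<in> {1..k}" "b = \<sigma> i" using b unfolding T_def by auto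
    show ?thesis using anti i j jk by auto
  qed
  have le: "sum Q S \<le> sum Q T" if S: "S \<subseteq> {1..n}" "card S = k" for S
  proof -
    have fS: "finite S" using S finite_subset by blast
    have fT: "finite T" using Tsub finite_subset by blast
    have c1: "card (S - T) = card (T - S)"
      using card_Diff_subset_Int[of S T] card_Diff_subset_Int[of T S] fS fT S cT
      by (simp add: Int_commute)
    have "sum Q (S - T) \<le> sum Q (T - S)"
    proof (cases "T - S = {}")
      case True
      then have "card (S - T) = 0" using c1 by (metis card.empty)
      then have "S - T = {}" using fS by simp
      then show ?thesis using True by simp
    next
      case False
      define m where "m = Min (Q ` (T - S))"
      have "sum Q (S - T) \<le> of_nat (card (S - T)) * m"
      proof (rule sum_bounded_above)
        fix a assume a: "a \<in> S - T"
        have "finite (Q ` (T - S))" using fT by simp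
        moreover have "Q ` (T - S) \<noteq> {}" using False by simp
        ultimately have "m \<in> Q ` (T - S)" unfolding m_def using Min_in by blast
        then obtain b where "b \<in> T - S" "m = Q b" by auto
        then show "Q a \<le> m" using key[of a b] a S by auto
      qed
      also have "\<dots> = of_nat (card (T - S)) * m" using c1 by simp
      also have "\<dots> \<le> sum Q (T - S)"
        by (rule sum_bounded_below) (use fT in \<open>auto simp: m_def\<close>)
      finally show ?thesis .
    qed
    moreover have "sum Q S = sum Q (S \<inter> T) + sum Q (S - T)" using fS by (rule sum.Int_Diff)
    moreover have "sum Q T = sum Q (T \<inter> S) + sum Q (T - S)" using fT by (rule sum.Int_Diff)
    ultimately show ?thesis by (simp add: Int_commute)
  qed
  have eq: "{sum Q S | S. S \<subseteq> {1..n} \<and> card S = k} = sum Q ` {S. S \<subseteq> {1..n} \<and> card S = k}" by auto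
  have fin: "finite {sum Q S | S. S \<subseteq> {1..n} \<and> card S = k}"
    unfolding eq by (rule finite_imageI) (rule finite_subset[of _ "Pow {1..n}"], auto)
  have "top_sum n Q k = sum Q T"
    unfolding top_sum_def
    by (rule Max_eqI[OF fin]) (use le Tsub cT in auto)
  then show ?thesis using sT by simp
qed



lemma chi2_bound:
  fixes u v \<rho> :: real
  assumes "u \<le> 1" "1 \<le> v" "v \<le> \<rho> * u" "\<rho> \<ge> 1" "u > 0"
  shows "(1 - u) * (v - 1) \<le> (\<rho> - 1)\<^sup>2 / (4 * \<rho>)"
proof -
  have "(1 - u) * (v - 1) \<le> (1 - u) * (\<rho> * u - 1)"
    using assms by (intro mult_left_mono) auto
  also have "\<dots> \<le> (\<rho> - 1)\<^sup>2 / (4 * \<rho>)"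
  proof -
    have "4 * \<rho> * ((1 - u) * (\<rho> * u - 1)) = (\<rho> - 1)\<^sup>2 - (2*\<rho>*u - \<rho> - 1)\<^sup>2"
      by (simp add: power2_eq_square algebra_simps)
    also have "\<dots> \<le> (\<rho> - 1)\<^sup>2" by simp
    finally show ?thesis using assms by (simp add: field_simps)
  qed
  finally show ?thesis .
qed

theorem theorem6:
  fixes n :: nat and P Q :: "nat \<Rightarrow> real" and f :: "real \<Rightarrow> real"
  assumes hP: "pmf_on n P" and hQ: "pmf_on n Q"
    and maj: "majorized n P Q"
    and conv: "convex_on {0<..} f"
    and diff1: "\<forall>x>0. f differentiable (at x)"
    and diff2: "\<forall>x>0. (deriv f) differentiable (at x)"
    and f1: "f 1 = 0"
  defines "qmax \<equiv> Max (Q ` {1..n})" and "qmin \<equiv> Min (Q ` {1..n})"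
  shows
   "(ereal (real n) * e_f f (real n * qmin) (real n * qmax) * ereal (sqnorm n Q - sqnorm n P)
        \<ge> ereal (fdiv f n Q (unif n) - fdiv f n P (unif n))
     \<and> ereal (fdiv f n Q (unif n) - fdiv f n P (unif n))
        \<ge> ereal (real n) * c_f f (real n * qmin) (real n * qmax) * ereal (sqnorm n Q - sqnorm n P)
     \<and> ereal (real n) * c_f f (real n * qmin) (real n * qmax) * ereal (sqnorm n Q - sqnorm n P) \<ge> 0)
   \<and> ((\<forall>t>0. f t = (t - 1)\<^sup>2) \<longrightarrow>
       ereal (real n) * e_f f (real n * qmin) (real n * qmax) * ereal (sqnorm n Q - sqnorm n P)
        = ereal (fdiv f n Q (unif n) - fdiv f n P (unif n))
     \<and> ereal (fdiv f n Q (unif n) - fdiv f n P (unif n))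
        = ereal (real n) * c_f f (real n * qmin) (real n * qmax) * ereal (sqnorm n Q - sqnorm n P))
   \<and> (\<forall>\<rho>::real. \<rho> \<ge> 1 \<and> qmax / qmin \<le> \<rho> \<longrightarrow>
       0 \<le> sqnorm n Q - sqnorm n P
       \<and> sqnorm n Q - sqnorm n P \<le> (\<rho> - 1)\<^sup>2 / (4 * \<rho> * real n))"
proof -
  have Ppos: "\<And>i. i \<in> {1..n} \<Longrightarrow> P i > 0" and Psum: "(\<Sum>i=1..n. P i) = 1"
    using hP unfolding pmf_on_def by auto
  have Qpos: "\<And>i. i \<in> {1..n} \<Longrightarrow> Q i > 0" and Qsum: "(\<Sum>i=1..n. Q i) = 1"
    using hQ unfolding pmf_on_def by auto
  have n1: "n \<ge> 1" using Qsum by (cases n) auto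
  then have npos: "real n > 0" by simp
  obtain \<sigma> where \<sigma>: "bij_betw \<sigma> {1..n} {1..n}"
    and \<sigma>a: "\<forall>i j. 1 \<le> i \<longrightarrow> i \<le> j \<longrightarrow> j \<le> n \<longrightarrow> Q (\<sigma> j) \<le> Q (\<sigma> i)"
    using sort_perm[of n Q] by blast
  obtain \<tau> where \<tau>: "bij_betw \<tau> {1..n} {1..n}"
    and \<tau>a: "\<forall>i j. 1 \<le> i \<longrightarrow> i \<le> j \<longrightarrow> j \<le> n \<longrightarrow> P (\<tau> j) \<le> P (\<tau> i)"
    using sort_perm[of n P] by blast
  have \<sigma>in: "\<And>i. i \<in> {1..n} \<Longrightarrow> \<sigma> i \<in> {1..n}" using \<sigma> bij_betwE by blast
  have \<tau>in: "\<And>i. i \<in> {1..n} \<Longrightarrow> \<tau> i \<in> {1..n}" using \<tau> bij_betwE by blast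
  have reQ: "(\<Sum>i=1..n. F (Q (\<sigma> i))) = (\<Sum>j=1..n. F (Q j))" for F :: "real \<Rightarrow> real"
    using sum.reindex_bij_betw[OF \<sigma>, of "\<lambda>j. F (Q j)"] by simp
  have reP: "(\<Sum>i=1..n. F (P (\<tau> i))) = (\<Sum>j=1..n. F (P j))" for F :: "real \<Rightarrow> real"
    using sum.reindex_bij_betw[OF \<tau>, of "\<lambda>j. F (P j)"] by simp
  define x where "x = (\<lambda>i. real n * Q (\<sigma> i))"
  define y where "y = (\<lambda>i. real n * P (\<tau> i))"
  have finQ: "finite (Q ` {1..n})" "Q ` {1..n} \<noteq> {}" using n1 by auto
  have qle: "\<And>j. j \<in> {1..n} \<Longrightarrow> qmin \<le> Q j \<and> Q j \<le> qmax"
    unfolding qmin_def qmax_def using finQ by auto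
  have qminpos: "qmin > 0"
    using Min_in[OF finQ] Qpos unfolding qmin_def by auto
  define a where "a = real n * qmin"
  define b where "b = real n * qmax"
  have apos: "a > 0" unfolding a_def using npos qminpos by simp
  have xr: "\<And>i. 1 \<le> i \<Longrightarrow> i \<le> n \<Longrightarrow> a \<le> x i \<and> x i \<le> b"
    unfolding x_def a_def b_def using qle \<sigma>in npos by auto
  have ps: "\<And>m. m \<le> n \<Longrightarrow> (\<Sum>i=1..m. y i) \<le> (\<Sum>i=1..m. x i)"
  proof -
    fix m assume m: "m \<le> n"
    show "(\<Sum>i=1..m. y i) \<le> (\<Sum>i=1..m. x i)"
    proof (cases "m = 0")
      case True then show ?thesis by simp
    next
      case False
      then have "m \<in> {1..n}" using m by simp
      then have "top_sum n P m \<le> top_sum n Q m" using maj unfolding majorized_def by blast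
      then have "(\<Sum>i=1..m. P (\<tau> i)) \<le> (\<Sum>i=1..m. Q (\<sigma> i))"
        using top_sum_sorted[OF \<tau> \<tau>a m] top_sum_sorted[OF \<sigma> \<sigma>a m] by simp
      then show ?thesis unfolding x_def y_def using npos
        by (simp add: sum_distrib_left[symmetric])
    qed
  qed
  have sx: "(\<Sum>i=1..n. x i) = real n" unfolding x_def
    using reQ[of "\<lambda>t. t"] Qsum by (simp add: sum_distrib_left[symmetric])
  have sy: "(\<Sum>i=1..n. y i) = real n" unfolding y_def
    using reP[of "\<lambda>t. t"] Psum by (simp add: sum_distrib_left[symmetric])
  have tot: "(\<Sum>i=1..n. y i) = (\<Sum>i=1..n. x i)" using sx sy by simp
  have yanti: "\<And>i j. 1 \<le> i \<Longrightarrow> i \<le> j \<Longrightarrow> j \<le> n \<Longrightarrow> y j \<le> y i"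
    unfolding y_def using \<tau>a npos by (simp add: mult_left_mono)
  have y1: "y 1 \<le> x 1" using ps[of 1] n1 by simp
  obtain m where nm: "n = Suc m" using n1 by (cases n) auto
  have yn: "x n \<le> y n"
  proof -
    have "(\<Sum>i=1..m. y i) \<le> (\<Sum>i=1..m. x i)" using ps[of m] nm by simp
    moreover have "(\<Sum>i=1..m. y i) + y n = (\<Sum>i=1..m. x i) + x n"
      using tot nm by simp
    ultimately show ?thesis by simp
  qed
  have yr: "\<And>i. 1 \<le> i \<Longrightarrow> i \<le> n \<Longrightarrow> a \<le> y i \<and> y i \<le> b"
  proof -
    fix i assume i: "1 \<le> i" "i \<le> n"
    have "y i \<le> y 1" using yanti[of 1 i] i by simp
    moreover have "y n \<le> y i" using yanti[of i n] i by simp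
    moreover have "x 1 \<le> b" "a \<le> x n" using xr[of 1] xr[of n] n1 by auto
    ultimately show "a \<le> y i \<and> y i \<le> b" using y1 yn by linarith
  qed
  have ab: "a \<le> b" using xr[of 1] n1 by auto
  have yanti1: "\<And>i. 1 \<le> i \<Longrightarrow> i < n \<Longrightarrow> y (Suc i) \<le> y i" using yanti by simp
  define S2 where "S2 = (\<Sum>i=1..n. x i ^ 2 - y i ^ 2)"
  define SF where "SF = (\<Sum>i=1..n. f (x i) - f (y i))"
  have sqQ: "sqnorm n Q = (\<Sum>i=1..n. x i ^ 2) / (real n)^2"
    unfolding sqnorm_def x_def using reQ[of "\<lambda>t. t^2"] npos
    by (simp add: power_mult_distrib sum_distrib_left[symmetric])
  have sqP: "sqnorm n P = (\<Sum>i=1..n. y i ^ 2) / (real n)^2"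
    unfolding sqnorm_def y_def using reP[of "\<lambda>t. t^2"] npos
    by (simp add: power_mult_distrib sum_distrib_left[symmetric])
  have dS2: "sqnorm n Q - sqnorm n P = S2 / (real n)^2"
    unfolding sqQ sqP S2_def by (simp add: sum_subtractf diff_divide_distrib)
  have fdQ: "fdiv f n Q (unif n) = (\<Sum>i=1..n. f (x i)) / real n"
    unfolding fdiv_def unif_def x_def using reQ[of "\<lambda>t. f (real n * t)"] npos
    by (simp add: sum_divide_distrib[symmetric] mult.commute)
  have fdP: "fdiv f n P (unif n) = (\<Sum>i=1..n. f (y i)) / real n"
    unfolding fdiv_def unif_def y_def using reP[of "\<lambda>t. f (real n * t)"] npos
    by (simp add: sum_divide_distrib[symmetric] mult.commute)
  have dSF: "fdiv f n Q (unif n) - fdiv f n P (unif n) = SF / real n"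
    unfolding fdQ fdP SF_def by (simp add: sum_subtractf diff_divide_distrib)
  note kar = karamata[of a _ _ _ b n x y, OF apos _ _ _ xr yr yanti1 ps tot]
  have sq_d1: "\<And>t. t > 0 \<Longrightarrow> ((\<lambda>t. t^2) has_real_derivative 2 * t) (at t)"
    by (auto intro!: derivative_eq_intros)
  have sq_d2: "\<And>t. t > 0 \<Longrightarrow> ((\<lambda>t. 2 * t) has_real_derivative 2) (at t)"
    by (auto intro!: derivative_eq_intros)
  note ksq = kar[of "\<lambda>t. t^2" "\<lambda>t. 2 * t" "\<lambda>t. 2", OF sq_d1 sq_d2]
  have S2ge: "(\<Sum>i=1..n. 2 * y i * (x i - y i)) \<le> S2" and S2ge0: "0 \<le> (\<Sum>i=1..n. 2 * y i * (x i - y i))"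
    using ksq unfolding S2_def by auto
  have S2nn: "0 \<le> S2" using S2ge S2ge0 by linarith
  have S2zero: "SF = 0" if "S2 = 0"
  proof -
    have "(\<Sum>i=1..n. (x i - y i)^2) = S2 - (\<Sum>i=1..n. 2 * y i * (x i - y i))"
      unfolding S2_def by (simp add: sum_subtractf[symmetric] power2_eq_square algebra_simps)
    then have "(\<Sum>i=1..n. (x i - y i)^2) \<le> 0" using that S2ge0 by simp
    then have "(\<Sum>i=1..n. (x i - y i)^2) = 0" by (simp add: sum_nonneg antisym)
    then have "\<forall>i\<in>{1..n}. (x i - y i)^2 = 0" by (subst (asm) sum_nonneg_eq_0_iff) auto
    then show ?thesis unfolding SF_def by simp
  qed
  have D1: "\<And>t. t > 0 \<Longrightarrow> (f has_real_derivative deriv f t) (at t)"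
    using diff1 DERIV_deriv_iff_real_differentiable by blast
  have D2: "\<And>t. t > 0 \<Longrightarrow> (deriv f has_real_derivative deriv (deriv f) t) (at t)"
    using diff2 DERIV_deriv_iff_real_differentiable by blast
  have fpp: "\<And>t. t > 0 \<Longrightarrow> 0 \<le> deriv (deriv f) t"
    using fpp_nonneg[OF conv diff1 diff2] by blast
  have Iab: "Iset a b = {a..b}" unfolding Iset_def using apos by auto
  have aI: "a \<in> Iset a b" using Iab ab by simp
  define C where "C = (INF t\<in>Iset a b. ereal (deriv (deriv f) t))"
  have Cle: "C \<le> ereal (deriv (deriv f) a)" unfolding C_def using aI by (rule INF_lower)
  have Cge: "0 \<le> C" unfolding C_def
    by (rule INF_greatest) (use fpp apos Iab in auto)
  obtain c0 where c0: "C = ereal c0" using Cle Cge by (cases C) auto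
  have c0nn: "0 \<le> c0" using Cge c0 by simp
  have c0le: "\<And>t. a \<le> t \<Longrightarrow> t \<le> b \<Longrightarrow> c0 \<le> deriv (deriv f) t"
  proof -
    fix t assume "a \<le> t" "t \<le> b"
    then have "t \<in> Iset a b" using Iab by simp
    then have "C \<le> ereal (deriv (deriv f) t)" unfolding C_def by (rule INF_lower)
    then show "c0 \<le> deriv (deriv f) t" using c0 by simp
  qed
  have cf: "c_f f a b = ereal (c0 / 2)" unfolding c_f_def C_def[symmetric] c0 by simp
  have lo_d1: "\<And>t. t > 0 \<Longrightarrow> ((\<lambda>t. f t - c0/2 * t^2) has_real_derivative deriv f t - c0 * t) (at t)"
    by (auto intro!: derivative_eq_intros D1)
  have lo_d2: "\<And>t. t > 0 \<Longrightarrow> ((\<lambda>t. deriv f t - c0 * t) has_real_derivative deriv (deriv f) t - c0) (at t)"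
    by (auto intro!: derivative_eq_intros D2)
  have klo: "0 \<le> (\<Sum>i=1..n. (f (x i) - c0/2 * (x i)^2) - (f (y i) - c0/2 * (y i)^2))"
    using kar[of "\<lambda>t. f t - c0/2 * t^2" "\<lambda>t. deriv f t - c0 * t" "\<lambda>t. deriv (deriv f) t - c0",
        OF lo_d1 lo_d2] c0le by fastforce
  have SFlo: "c0/2 * S2 \<le> SF"
  proof -
    have "(\<Sum>i=1..n. (f (x i) - c0/2 * (x i)^2) - (f (y i) - c0/2 * (y i)^2)) = SF - c0/2 * S2"
      unfolding SF_def S2_def by (simp add: sum_subtractf[symmetric] sum_distrib_left algebra_simps)
    then show ?thesis using klo by simp
  qed
  define E where "E = (SUP t\<in>Iset a b. ereal (deriv (deriv f) t))"
  have Ege: "ereal (deriv (deriv f) a) \<le> E" unfolding E_def using aI by (rule SUP_upper)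
  have "0 \<le> ereal (deriv (deriv f) a)" using fpp[OF apos] by simp
  then have E0: "0 \<le> E" using Ege by (rule order_trans)
  have ef: "e_f f a b = ereal (1/2) * E" unfolding e_f_def E_def ..
  have lowA: "ereal (real n) * c_f f a b * ereal (S2 / (real n)^2) \<le> ereal (SF / real n)"
  proof -
    have "real n * (c0 / 2) * (S2 / (real n)^2) = (c0/2 * S2) / real n"
      using npos by (simp add: power2_eq_square field_simps)
    also have "\<dots> \<le> SF / real n" by (rule divide_right_mono[OF SFlo]) (use npos in simp)
    finally show ?thesis unfolding cf by simp
  qed
  have nonnegA: "0 \<le> ereal (real n) * c_f f a b * ereal (S2 / (real n)^2)"
    unfolding cf using c0nn S2nn npos by simp
  have upA: "ereal (SF / real n) \<le> ereal (real n) * e_f f a b * ereal (S2 / (real n)^2)"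
  proof (cases E)
    case (real e0)
    have e0le: "deriv (deriv f) t \<le> e0" if "a \<le> t" "t \<le> b" for t
    proof -
      have "t \<in> Iset a b" using Iab that by simp
      then have "ereal (deriv (deriv f) t) \<le> E" unfolding E_def by (rule SUP_upper)
      then show ?thesis using real by simp
    qed
    have up_d1: "\<And>t. t > 0 \<Longrightarrow> ((\<lambda>t. e0/2 * t^2 - f t) has_real_derivative e0 * t - deriv f t) (at t)"
      by (auto intro!: derivative_eq_intros D1)
    have up_d2: "\<And>t. t > 0 \<Longrightarrow> ((\<lambda>t. e0 * t - deriv f t) has_real_derivative e0 - deriv (deriv f) t) (at t)"
      by (auto intro!: derivative_eq_intros D2)
    have kup: "0 \<le> (\<Sum>i=1..n. (e0/2 * (x i)^2 - f (x i)) - (e0/2 * (y i)^2 - f (y i)))"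
      using kar[of "\<lambda>t. e0/2 * t^2 - f t" "\<lambda>t. e0 * t - deriv f t" "\<lambda>t. e0 - deriv (deriv f) t",
          OF up_d1 up_d2] e0le by fastforce
    have SFup: "SF \<le> e0/2 * S2"
    proof -
      have "(\<Sum>i=1..n. (e0/2 * (x i)^2 - f (x i)) - (e0/2 * (y i)^2 - f (y i))) = e0/2 * S2 - SF"
        unfolding SF_def S2_def by (simp add: sum_subtractf[symmetric] sum_distrib_left algebra_simps)
      then show ?thesis using kup by simp
    qed
    have "SF / real n \<le> (e0/2 * S2) / real n" by (rule divide_right_mono[OF SFup]) (use npos in simp)
    also have "\<dots> = real n * (e0 / 2) * (S2 / (real n)^2)"
      using npos by (simp add: power2_eq_square field_simps)
    finally show ?thesis unfolding ef real by simp
  next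
    case PInf
    then have efi: "e_f f a b = \<infinity>" unfolding ef by simp
    show ?thesis
    proof (cases "S2 = 0")
      case True
      then show ?thesis using S2zero by (simp add: zero_ereal_def[symmetric])
    next
      case False
      then have "S2 / (real n)^2 > 0" using S2nn npos by simp
      then show ?thesis unfolding efi using npos False by simp
    qed
  next
    case MInf then show ?thesis using E0 by simp
  qed
  have chi: "(\<forall>t>0. f t = (t - 1)\<^sup>2) \<longrightarrow>
      ereal (real n) * e_f f a b * ereal (S2 / (real n)^2) = ereal (SF / real n)
    \<and> ereal (SF / real n) = ereal (real n) * c_f f a b * ereal (S2 / (real n)^2)"
  proof
    assume H: "\<forall>t>0. f t = (t - 1)\<^sup>2"
    have dd: "deriv f t = 2 * (t - 1)" if t: "t > 0" for t
    proof -
      have "((\<lambda>t. (t - 1)^2) has_real_derivative 2 * (t - 1)) (at t)"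
        by (auto intro!: derivative_eq_intros)
      then have "(f has_real_derivative 2 * (t - 1)) (at t)"
        by (rule has_field_derivative_transform_within_open[of _ _ _ "{0<..}"]) (use H t in auto)
      then show ?thesis by (rule DERIV_imp_deriv)
    qed
    have ddd: "deriv (deriv f) t = 2" if t: "t > 0" for t
    proof -
      have "((\<lambda>t. 2 * (t - 1)) has_real_derivative 2) (at t)"
        by (auto intro!: derivative_eq_intros)
      then have "(deriv f has_real_derivative 2) (at t)"
        by (rule has_field_derivative_transform_within_open[of _ _ _ "{0<..}"]) (use dd t in auto)
      then show ?thesis by (rule DERIV_imp_deriv)
    qed
    have ne: "Iset a b \<noteq> {}" using aI by blast
    have "E = (SUP t\<in>Iset a b. ereal 2)" unfolding E_def
      by (rule SUP_cong) (use ddd Iab apos in auto)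
    then have E2: "E = ereal 2" using ne by simp
    have "C = (INF t\<in>Iset a b. ereal 2)" unfolding C_def
      by (rule INF_cong) (use ddd Iab apos in auto)
    then have "C = ereal 2" using ne by simp
    then have cf1: "c_f f a b = ereal 1" using cf c0 by simp
    have ef1: "e_f f a b = ereal 1" unfolding ef E2 by simp
    have "SF = (\<Sum>i=1..n. (x i - 1)^2 - (y i - 1)^2)"
      unfolding SF_def
    proof (rule sum.cong)
      fix i assume i: "i \<in> {1..n}"
      have "a \<le> x i" "a \<le> y i" using xr[of i] yr[of i] i by auto
      then have "x i > 0" "y i > 0" using apos by linarith+
      then show "f (x i) - f (y i) = (x i - 1)^2 - (y i - 1)^2" using H by simp
    qed simp
    also have "\<dots> = S2 - 2 * ((\<Sum>i=1..n. x i) - (\<Sum>i=1..n. y i))"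
      unfolding S2_def by (simp add: power2_diff sum_subtractf sum.distrib sum_distrib_left algebra_simps)
    also have "\<dots> = S2" using tot by simp
    finally have SFS2: "SF = S2" .
    have "real n * 1 * (S2 / (real n)^2) = SF / real n"
      using npos SFS2 by (simp add: power2_eq_square)
    then show "ereal (real n) * e_f f a b * ereal (S2 / (real n)^2) = ereal (SF / real n)
    \<and> ereal (SF / real n) = ereal (real n) * c_f f a b * ereal (S2 / (real n)^2)"
      unfolding cf1 ef1 by simp
  qed
  have partB: "\<forall>\<rho>::real. \<rho> \<ge> 1 \<and> qmax / qmin \<le> \<rho> \<longrightarrow>
       0 \<le> sqnorm n Q - sqnorm n P
       \<and> sqnorm n Q - sqnorm n P \<le> (\<rho> - 1)\<^sup>2 / (4 * \<rho> * real n)"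
  proof (intro allI impI conjI)
    fix \<rho> :: real assume r: "\<rho> \<ge> 1 \<and> qmax / qmin \<le> \<rho>"
    show "0 \<le> sqnorm n Q - sqnorm n P" unfolding dS2 using S2nn by simp
    have "0 \<le> (\<Sum>j=1..n. (P j - 1 / real n)^2)" by (simp add: sum_nonneg)
    also have "(\<Sum>j=1..n. (P j - 1 / real n)^2) = sqnorm n P - 2 / real n * (\<Sum>j=1..n. P j) + real n * (1 / real n)^2"
      unfolding sqnorm_def by (simp add: power2_diff sum_subtractf sum.distrib sum_distrib_left sum_divide_distrib algebra_simps)
    finally have sPge: "1 / real n \<le> sqnorm n P" using Psum npos by (simp add: power2_eq_square)
    have "0 \<le> (\<Sum>j=1..n. (Q j - qmin) * (qmax - Q j))"
      by (rule sum_nonneg) (use qle in auto)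
    also have "(\<Sum>j=1..n. (Q j - qmin) * (qmax - Q j)) = (qmin + qmax) * (\<Sum>j=1..n. Q j) - sqnorm n Q - real n * (qmin * qmax)"
      unfolding sqnorm_def by (simp add: sum_subtractf sum.distrib sum_distrib_left power2_eq_square algebra_simps)
    finally have sQle: "sqnorm n Q \<le> (qmin + qmax) - real n * (qmin * qmax)" using Qsum by simp
    define u where "u = real n * qmin"
    define v where "v = real n * qmax"
    have "real n * qmin \<le> (\<Sum>j=1..n. Q j)"
      using sum_bounded_below[of "{1..n}" qmin Q] qle by simp
    then have u1: "u \<le> 1" using Qsum u_def by simp
    have "(\<Sum>j=1..n. Q j) \<le> real n * qmax"
      using sum_bounded_above[of "{1..n}" Q qmax] qle by simp
    then have v1: "1 \<le> v" using Qsum v_def by simp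
    have "qmax \<le> \<rho> * qmin" using r qminpos by (simp add: divide_le_eq)
    then have vu: "v \<le> \<rho> * u" unfolding u_def v_def using npos
      by (metis mult.left_commute mult_le_cancel_left_pos)
    have upos: "u > 0" unfolding u_def using npos qminpos by simp
    have key: "(1 - u) * (v - 1) \<le> (\<rho> - 1)\<^sup>2 / (4 * \<rho>)" using chi2_bound[OF u1 v1 vu _ upos] r by simp
    have "sqnorm n Q - sqnorm n P \<le> (qmin + qmax) - real n * (qmin * qmax) - 1 / real n"
      using sQle sPge by simp
    also have "\<dots> = (1 - u) * (v - 1) / real n"
      unfolding u_def v_def using npos by (simp add: field_simps)
    also have "\<dots> \<le> ((\<rho> - 1)\<^sup>2 / (4 * \<rho>)) / real n" by (rule divide_right_mono[OF key]) (use npos in simp)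
    also have "\<dots> = (\<rho> - 1)\<^sup>2 / (4 * \<rho> * real n)" by simp
    finally show "sqnorm n Q - sqnorm n P \<le> (\<rho> - 1)\<^sup>2 / (4 * \<rho> * real n)" .
  qed
  show ?thesis
    unfolding a_def[symmetric] b_def[symmetric] dS2 dSF
    using lowA nonnegA upA chi partB[unfolded dS2] by auto
qed

end
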